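(* Fix $b\in\mathbb{N}=\{1,2,3,\dots\}$ and let $f:\mathbb{N}\to\mathbb{C}$ be an arithmetic function satisfying \[ \frac{1}{N}\sum_{k=1}^{N}\frac{|(f\ast\mu)(k)|}{k}\to 0 \quad (N\to\infty), \] where $\mu$ is the Möbius function and $\ast$ is Dirichlet convolution. Define $\Lambda_f:\mathbb{N}\times\mathbb{N}\to\mathbb{C}$ by $\Lambda_f(r,s)=f(\gcd_b(r,s))$. Suppose the Dirichlet series $\zeta_f(s)=\sum_{n\ge1} f(n)n^{-s}$ converges absolutely at $s=b+1$. Then the mean value $M(\Lambda_f)$ exists and \[ M(\Lambda_f)=\frac{\zeta_f(b+1)}{\zeta(b+1)}, \] where $\zeta$ is the Riemann zeta function. Moreover, the displayed limit condition on $f\ast\mu$ holds, for example, whenever $f$ is a bounded function.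
   Context: For $b\in\mathbb{N}$ and $r,s\in\mathbb{N}$, the generalized greatest common divisor is $\gcd_b(r,s)=\max\{k\in\mathbb{N} : k\mid r \text{ and } k^b\mid s\}$. For $N\in\mathbb{N}$ let $T_N=\{(r,s)\in\mathbb{N}\times\mathbb{N} : 0<r,s\le N\}$. For a function $\Lambda:\mathbb{N}\times\mathbb{N}\to\mathbb{C}$, its mean value is $M(\Lambda)=\lim_{N\to\infty}\frac{1}{|T_N|}\sum_{(r,s)\in T_N}\Lambda(r,s)$ (when the limit exists). *)

theory Defs
  imports Complex_Main "HOL-Computational_Algebra.Computational_Algebra"
begin

definition gcd_b :: "nat \<Rightarrow> nat \<Rightarrow> nat \<Rightarrow> nat" where
  "gcd_b b r s = Max {k. k dvd r \<and> k ^ b dvd s}"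

definition moebius :: "nat \<Rightarrow> complex" where
  "moebius n = (if n = 0 \<or> \<not> squarefree n then 0
                else (-1) ^ card (prime_factors n))"

definition dirichlet_conv :: "(nat \<Rightarrow> complex) \<Rightarrow> (nat \<Rightarrow> complex) \<Rightarrow> nat \<Rightarrow> complex" where
  "dirichlet_conv f g n = (\<Sum>d \<in> {d. d dvd n}. f d * g (n div d))"

definition zeta_nat :: "nat \<Rightarrow> real" where
  "zeta_nat m = (\<Sum>n. 1 / real (Suc n) ^ m)"

definition dirichlet_series_at :: "(nat \<Rightarrow> complex) \<Rightarrow> nat \<Rightarrow> complex" where
  "dirichlet_series_at f m = (\<Sum>n. f (Suc n) / of_nat (Suc n) ^ m)"

definition has_mean_value :: "(nat \<Rightarrow> nat \<Rightarrow> complex) \<Rightarrow> complex \<Rightarrow> bool" where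
  "has_mean_value Lam L \<longleftrightarrow>
     ((\<lambda>N. (\<Sum>(r, s) \<in> {1..N} \<times> {1..N}. Lam r s) / of_nat (card ({1..N} \<times> {1..N})))
        \<longlonglongrightarrow> L)"

end

theory Submission
  imports Defs "HOL-Analysis.Infinite_Sum" "HOL-Analysis.Summation_Tests" "HOL-Analysis.Elementary_Normed_Spaces" "HOL-Real_Asymp.Real_Asymp"
begin


lemma alt_sum_Pow:
  assumes "finite P"
  shows "(\<Sum>S\<in>Pow P. (-1::complex) ^ card S) = (if P = {} then 1 else 0)"
  using assms
proof (induction P rule: finite_induct)
  case empty
  then show ?case by simp
next
  case (insert x F)
  have inj: "inj_on (insert x) (Pow F)"
    using insert.hyps(2) by (auto simp: inj_on_def)
  have disj: "Pow F \<inter> insert x ` Pow F = {}" using insert.hyps(2) by auto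
  have "(\<Sum>S\<in>Pow (insert x F). (-1::complex) ^ card S)
      = (\<Sum>S\<in>Pow F. (-1::complex) ^ card S) + (\<Sum>S\<in>insert x ` Pow F. (-1::complex) ^ card S)"
    unfolding Pow_insert using insert.hyps(1) disj by (intro sum.union_disjoint) auto
  also have "(\<Sum>S\<in>insert x ` Pow F. (-1::complex) ^ card S) = (\<Sum>S\<in>Pow F. (-1::complex) ^ card (insert x S))"
    by (subst sum.reindex[OF inj]) simp
  also have "\<dots> = (\<Sum>S\<in>Pow F. - ((-1::complex) ^ card S))"
  proof (intro sum.cong refl)
    fix S assume "S \<in> Pow F"
    then have "finite S" "x \<notin> S" using insert.hyps finite_subset by auto
    then show "(-1::complex) ^ card (insert x S) = - ((-1) ^ card S)" by simp
  qed
  finally show ?case by (simp add: sum_negf)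
qed

lemma prod_primes_factors:
  fixes S :: "nat set"
  assumes "finite S" "\<And>p. p \<in> S \<Longrightarrow> prime p"
  shows "prime_factorization (\<Prod>S) = mset_set S"
proof -
  have "\<Prod>S = prod_mset (mset_set S)" by (simp add: prod_unfold_prod_mset)
  moreover have "prime_factorization (prod_mset (mset_set S)) = mset_set S"
    using assms by (intro prime_factorization_prod_mset_primes) auto
  ultimately show ?thesis by simp
qed

lemma prime_factors_prod_primes:
  fixes S :: "nat set"
  assumes "finite S" "\<And>p. p \<in> S \<Longrightarrow> prime p"
  shows "prime_factors (\<Prod>S) = S"
  using prod_primes_factors[OF assms] assms(1) by simp

lemma squarefree_prod_primes:
  fixes S :: "nat set"
  assumes "finite S" "\<And>p. p \<in> S \<Longrightarrow> prime p"
  shows "squarefree (\<Prod>S)"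
proof -
  have nz: "\<Prod>S \<noteq> 0" using assms by (metis prime_gt_0_nat not_gr0 prod_zero_iff)
  show ?thesis
  proof (subst squarefree_factorial_semiring''[OF nz], intro allI impI)
    fix p :: nat assume "prime p"
    have "multiplicity p (\<Prod>S) = count (prime_factorization (\<Prod>S)) p"
      using \<open>prime p\<close> by (simp add: count_prime_factorization)
    also have "\<dots> = count (mset_set S) p" by (simp add: prod_primes_factors[OF assms])
    also have "\<dots> \<le> 1" using assms(1) by (cases "p \<in> S") (simp_all add: count_mset_set)
    finally show "multiplicity p (\<Prod>S) \<le> 1" .
  qed
qed

lemma squarefree_prod_pf:
  fixes m :: nat
  assumes "m > 0" "squarefree m"
  shows "\<Prod>(prime_factors m) = m"
proof -
  have "(\<Prod>p\<in>prime_factors m. p ^ multiplicity p m) = m"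
    using prod_prime_factors[of m] assms by simp
  moreover have "(\<Prod>p\<in>prime_factors m. p ^ multiplicity p m) = \<Prod>(prime_factors m)"
    using assms squarefree_factorial_semiring'[of m] by (intro prod.cong) auto
  ultimately show ?thesis by simp
qed

lemma prod_pf_dvd:
  fixes n :: nat
  assumes "n > 0"
  shows "\<Prod>(prime_factors n) dvd n"
proof -
  have "\<Prod>(prime_factors n) dvd (\<Prod>p\<in>prime_factors n. p ^ multiplicity p n)"
  proof (rule prod_dvd_prod)
    fix p assume "p \<in> prime_factors n"
    then have "multiplicity p n > 0" using prime_factors_multiplicity by blast
    then show "p dvd p ^ multiplicity p n" by (simp add: dvd_power)
  qed
  then show ?thesis using prod_prime_factors[of n] assms by simp
qed

lemma moebius_sum:
  fixes n :: nat
  assumes "n > 0"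
  shows "(\<Sum>d\<in>{d. d dvd n}. moebius d) = (if n = 1 then 1 else 0)"
proof -
  define P where "P = prime_factors n"
  have finP: "finite P" by (simp add: P_def)
  have fin: "finite {d. d dvd n}" using assms by simp
  have "(\<Sum>d\<in>{d. d dvd n}. moebius d) = (\<Sum>d\<in>{d. d dvd n \<and> squarefree d}. moebius d)"
    using fin by (intro sum.mono_neutral_right) (auto simp: moebius_def)
  also have "{d. d dvd n \<and> squarefree d} = (\<lambda>S. \<Prod>S) ` Pow P"
  proof safe
    fix d assume d: "d dvd n" "squarefree d"
    then have "d > 0" using assms by (metis dvd_0_left_iff neq0_conv not_squarefree_0)
    then have "d = \<Prod>(prime_factors d)" using squarefree_prod_pf d by simp
    moreover have "prime_factors d \<subseteq> P" unfolding P_def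
      using d \<open>d > 0\<close> assms by (auto simp: prime_factors_dvd intro: dvd_trans)
    ultimately show "d \<in> (\<lambda>S. \<Prod>S) ` Pow P" by blast
  next
    fix S assume "S \<subseteq> P"
    then have "finite S" "\<And>p. p \<in> S \<Longrightarrow> prime p" using finP finite_subset P_def by auto
    then show "squarefree (\<Prod>S)" by (rule squarefree_prod_primes)
    have "\<Prod>S dvd \<Prod>P" using \<open>S \<subseteq> P\<close> finP by (simp add: prod_dvd_prod_subset)
    then show "\<Prod>S dvd n" using prod_pf_dvd[OF assms] P_def dvd_trans by blast
  qed
  also have "(\<Sum>d\<in>(\<lambda>S. \<Prod>S) ` Pow P. moebius d) = (\<Sum>S\<in>Pow P. moebius (\<Prod>S))"
  proof -
    have "inj_on (\<lambda>S. \<Prod>S) (Pow P)"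
    proof (rule inj_onI)
      fix S T assume "S \<in> Pow P" "T \<in> Pow P" "\<Prod>S = \<Prod>T"
      then show "S = T" using prime_factors_prod_primes finP finite_subset P_def
        by (metis PowD in_prime_factors_imp_prime subsetD rev_finite_subset)
    qed
    then show ?thesis using sum.reindex[of "\<lambda>S. \<Prod>S" "Pow P" moebius] by (simp add: o_def)
  qed
  also have "\<dots> = (\<Sum>S\<in>Pow P. (-1::complex) ^ card S)"
  proof (intro sum.cong refl)
    fix S assume "S \<in> Pow P"
    then have S: "finite S" "\<And>p. p \<in> S \<Longrightarrow> prime p" using finP finite_subset P_def by auto
    then have "\<Prod>S \<noteq> 0" by (metis prime_gt_0_nat not_gr0 prod_zero_iff)
    then show "moebius (\<Prod>S) = (-1) ^ card S"
      using squarefree_prod_primes[OF S] prime_factors_prod_primes[OF S] by (simp add: moebius_def)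
  qed
  also have "\<dots> = (if P = {} then 1 else 0)" by (rule alt_sum_Pow[OF finP])
  also have "(P = {}) \<longleftrightarrow> n = 1"
  proof -
    have "P = {} \<longleftrightarrow> prime_factorization n = {#}" unfolding P_def by simp
    also have "\<dots> \<longleftrightarrow> n = 1" using assms by (simp add: prime_factorization_empty_iff)
    finally show ?thesis .
  qed
  finally show ?thesis .
qed




lemma dvd_sum_swap:
  fixes n :: nat and h :: "nat \<Rightarrow> nat \<Rightarrow> complex"
  assumes "n > 0"
  shows "(\<Sum>d\<in>{d. d dvd n}. \<Sum>e\<in>{e. e dvd d}. h e (d div e))
       = (\<Sum>e\<in>{e. e dvd n}. \<Sum>m\<in>{m. m dvd n div e}. h e m)"
proof -
  have fin1: "finite {d. d dvd n}" using assms by simp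
  have "(\<Sum>d\<in>{d. d dvd n}. \<Sum>e\<in>{e. e dvd d}. h e (d div e))
      = (\<Sum>(d,e)\<in>Sigma {d. d dvd n} (\<lambda>d. {e. e dvd d}). h e (d div e))"
    using fin1 assms by (intro sum.Sigma) (auto intro: finite_divisors_nat)
  also have "\<dots> = (\<Sum>(e,m)\<in>Sigma {e. e dvd n} (\<lambda>e. {m. m dvd n div e}). h e m)"
  proof (rule sum.reindex_bij_witness[where i = "\<lambda>(e,m). (e*m, e)" and j = "\<lambda>(d,e). (e, d div e)"])
    fix a assume "a \<in> Sigma {d. d dvd n} (\<lambda>d. {e. e dvd d})"
    then obtain d e where a: "a = (d,e)" "d dvd n" "e dvd d" by auto
    then show "(case (case a of (d, e) \<Rightarrow> (e, d div e)) of (e, m) \<Rightarrow> (e * m, e)) = a" by auto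
    show "(case a of (d, e) \<Rightarrow> (e, d div e)) \<in> Sigma {e. e dvd n} (\<lambda>e. {m. m dvd n div e})"
      using a assms by (auto intro: dvd_trans simp: div_dvd_div)
    show "(case case a of (d, e) \<Rightarrow> (e, d div e) of (e, m) \<Rightarrow> h e m) = (case a of (d, e) \<Rightarrow> h e (d div e))"
      using a by simp
  next
    fix a assume "a \<in> Sigma {e. e dvd n} (\<lambda>e. {m. m dvd n div e})"
    then obtain e m where a: "a = (e,m)" "e dvd n" "m dvd n div e" by auto
    have "e > 0" using a assms by (metis dvd_0_left_iff neq0_conv)
    then show "(case (case a of (e, m) \<Rightarrow> (e * m, e)) of (d, e) \<Rightarrow> (e, d div e)) = a" using a by auto
    have "e * m dvd n" using a by (metis dvd_mult_div_cancel mult_dvd_mono dvd_refl)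
    then show "(case a of (e, m) \<Rightarrow> (e * m, e)) \<in> Sigma {d. d dvd n} (\<lambda>d. {e. e dvd d})" using a by auto
  qed
  also have "\<dots> = (\<Sum>e\<in>{e. e dvd n}. \<Sum>m\<in>{m. m dvd n div e}. h e m)"
    using fin1 assms by (subst sum.Sigma) (auto intro: finite_divisors_nat simp: dvd_div_eq_0_iff)
  finally show ?thesis .
qed

lemma moebius_inversion:
  fixes n :: nat
  assumes "n > 0"
  shows "(\<Sum>d\<in>{d. d dvd n}. dirichlet_conv f moebius d) = f n"
proof -
  have "(\<Sum>d\<in>{d. d dvd n}. dirichlet_conv f moebius d)
      = (\<Sum>d\<in>{d. d dvd n}. \<Sum>e\<in>{e. e dvd d}. f e * moebius (d div e))"
    by (simp add: dirichlet_conv_def)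
  also have "\<dots> = (\<Sum>e\<in>{e. e dvd n}. \<Sum>m\<in>{m. m dvd n div e}. f e * moebius m)"
    by (rule dvd_sum_swap[OF assms])
  also have "\<dots> = (\<Sum>e\<in>{e. e dvd n}. if e = n then f e else 0)"
  proof (intro sum.cong refl)
    fix e assume e: "e \<in> {e. e dvd n}"
    then have pos: "n div e > 0" using assms
      by (metis dvd_div_eq_0_iff mem_Collect_eq neq0_conv)
    have "(\<Sum>m\<in>{m. m dvd n div e}. f e * moebius m) = f e * (\<Sum>m\<in>{m. m dvd n div e}. moebius m)"
      by (simp add: sum_distrib_left)
    also have "\<dots> = f e * (if n div e = 1 then 1 else 0)" by (simp add: moebius_sum[OF pos])
    also have "(n div e = 1) \<longleftrightarrow> e = n" using e assms
      by (metis dvd_mult_div_cancel mem_Collect_eq mult.right_neutral div_self neq0_conv dvd_0_left_iff)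
    finally show "(\<Sum>m\<in>{m. m dvd n div e}. f e * moebius m) = (if e = n then f e else 0)" by simp
  qed
  also have "\<dots> = f n" using assms by (subst sum.delta) auto
  finally show ?thesis .
qed

lemma gcd_b_set_finite:
  fixes r s :: nat assumes "r > 0"
  shows "finite {k. k dvd r \<and> k ^ b dvd s}"
  by (rule finite_subset[of _ "{d. d dvd r}"]) (use assms in auto)

lemma gcd_b_in:
  fixes r s :: nat assumes "r > 0"
  shows "gcd_b b r s \<in> {k. k dvd r \<and> k ^ b dvd s}"
  unfolding gcd_b_def using gcd_b_set_finite[OF assms]
  by (intro Max_in) (auto intro: exI[of _ 1])

lemma gcd_b_pos:
  fixes r s :: nat assumes "r > 0"
  shows "gcd_b b r s > 0"
  using gcd_b_in[OF assms] assms by (metis dvd_0_left_iff mem_Collect_eq neq0_conv)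

lemma gcd_b_dvd_iff:
  fixes r s d :: nat assumes "r > 0" "s > 0"
  shows "d dvd gcd_b b r s \<longleftrightarrow> d dvd r \<and> d ^ b dvd s"
proof
  let ?G = "gcd_b b r s"
  have G: "?G dvd r" "?G ^ b dvd s" using gcd_b_in[OF assms(1)] by auto
  {
    assume "d dvd ?G"
    then show "d dvd r \<and> d ^ b dvd s" using G by (meson dvd_power_same dvd_trans)
  }
  assume d: "d dvd r \<and> d ^ b dvd s"
  have dpos: "d > 0" using d assms by (metis dvd_0_left_iff neq0_conv)
  have Gpos: "?G > 0" by (rule gcd_b_pos[OF assms(1)])
  have "lcm d ?G ^ b * gcd d ?G ^ b = d ^ b * ?G ^ b"
    by (metis power_mult_distrib prod_gcd_lcm_nat mult.commute)
  moreover have "lcm (d ^ b) (?G ^ b) * gcd (d ^ b) (?G ^ b) = d ^ b * ?G ^ b"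
    by (metis prod_gcd_lcm_nat mult.commute)
  moreover have "gcd d ?G ^ b > 0" using dpos by simp
  ultimately have "lcm d ?G ^ b * gcd d ?G ^ b = lcm (d ^ b) (?G ^ b) * gcd d ?G ^ b" by (simp add: gcd_exp)
  then have "lcm d ?G ^ b = lcm (d ^ b) (?G ^ b)" using \<open>gcd d ?G ^ b > 0\<close> dpos by auto
  then have l2: "lcm d ?G ^ b dvd s" using d G by simp
  have l1: "lcm d ?G dvd r" using d G by simp
  have mem: "lcm d ?G \<in> {k. k dvd r \<and> k ^ b dvd s}" using l1 l2 by simp
  have "lcm d ?G \<le> Max {k. k dvd r \<and> k ^ b dvd s}" by (rule Max_ge[OF gcd_b_set_finite[OF assms(1)] mem])
  then have "lcm d ?G \<le> ?G" by (metis gcd_b_def)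
  moreover have "?G dvd lcm d ?G" by simp
  moreover have "lcm d ?G > 0" using dpos Gpos by (simp add: lcm_pos_nat)
  ultimately have "lcm d ?G = ?G" by (meson dvd_imp_le order_antisym)
  then show "d dvd ?G" by (metis dvd_lcm1)
qed

lemma card_multiples:
  fixes e N :: nat assumes "e > 0"
  shows "card {k\<in>{1..N}. e dvd k} = N div e"
proof -
  have "{k\<in>{1..N}. e dvd k} = (\<lambda>m. e * m) ` {1..N div e}"
  proof safe
    fix k assume k: "k \<in> {1..N}" "e dvd k"
    then obtain m where m: "k = e * m" by auto
    have "m \<ge> 1" using k m by (cases m) auto
    moreover have "m \<le> N div e" using k m assms
      by (metis atLeastAtMost_iff div_le_mono nonzero_mult_div_cancel_left not_gr0)
    ultimately show "k \<in> (\<lambda>m. e * m) ` {1..N div e}" using m by auto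
  next
    fix m assume m: "m \<in> {1..N div e}"
    have "e * m \<le> e * (N div e)" using m by simp
    also have "\<dots> \<le> N" by simp
    finally show "e * m \<in> {1..N}" using m assms by auto
  qed auto
  moreover have "inj_on (\<lambda>m. e * m) {1..N div e}" using assms by (auto simp: inj_on_def)
  ultimately show ?thesis by (simp add: card_image)
qed

lemma sum_pairs_indicator:
  fixes A B :: "nat set" and c :: complex
  assumes "finite A" "finite B"
  shows "(\<Sum>(r,s)\<in>A \<times> B. if P r \<and> Q s then c else 0) = c * of_nat (card {r\<in>A. P r}) * of_nat (card {s\<in>B. Q s})"
proof -
  have "(\<Sum>(r,s)\<in>A \<times> B. if P r \<and> Q s then c else 0) = (\<Sum>r\<in>A. \<Sum>s\<in>B. if P r \<and> Q s then c else 0)"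
    by (rule sum.cartesian_product[symmetric])
  also have "\<dots> = (\<Sum>r\<in>A. (if P r then 1 else 0) * (\<Sum>s\<in>B. if Q s then c else 0))"
    by (intro sum.cong refl) (auto)
  also have "\<dots> = (\<Sum>r\<in>A. (if P r then 1 else 0)) * (\<Sum>s\<in>B. if Q s then c else 0)"
    by (simp add: sum_distrib_right)
  also have "(\<Sum>r\<in>A. (if P r then 1 else 0::complex)) = of_nat (card {r\<in>A. P r})"
    using assms by (simp add: sum.If_cases Int_def)
  also have "(\<Sum>s\<in>B. if Q s then c else 0) = c * of_nat (card {s\<in>B. Q s})"
    using assms by (simp add: sum.If_cases Int_def)
  finally show ?thesis by simp
qed

lemma sum_gcd_b:
  fixes f :: "nat \<Rightarrow> complex" and N b :: nat
  shows "(\<Sum>(r,s)\<in>{1..N} \<times> {1..N}. f (gcd_b b r s))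
       = (\<Sum>d=1..N. dirichlet_conv f moebius d * of_nat (N div d) * of_nat (N div d ^ b))"
proof -
  let ?g = "dirichlet_conv f moebius"
  have "(\<Sum>(r,s)\<in>{1..N} \<times> {1..N}. f (gcd_b b r s))
      = (\<Sum>(r,s)\<in>{1..N} \<times> {1..N}. \<Sum>d\<in>{1..N}. if d dvd r \<and> d ^ b dvd s then ?g d else 0)"
  proof (intro sum.cong refl, clarify)
    fix r s assume rs: "r \<in> {1..N}" "s \<in> {1..N}"
    then have pos: "r > 0" "s > 0" by auto
    have "f (gcd_b b r s) = (\<Sum>d\<in>{d. d dvd gcd_b b r s}. ?g d)"
      by (rule moebius_inversion[symmetric, OF gcd_b_pos[OF pos(1)]])
    also have "{d. d dvd gcd_b b r s} = {d\<in>{1..N}. d dvd r \<and> d ^ b dvd s}"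
      using gcd_b_dvd_iff[OF pos] rs pos
      by (auto dest: dvd_imp_le intro: Nat.gr0I)
    also have "(\<Sum>d\<in>{d\<in>{1..N}. d dvd r \<and> d ^ b dvd s}. ?g d) = (\<Sum>d\<in>{1..N}. if d dvd r \<and> d ^ b dvd s then ?g d else 0)"
      by (intro sum.inter_filter) simp
    finally show "f (gcd_b b r s) = (\<Sum>d\<in>{1..N}. if d dvd r \<and> d ^ b dvd s then ?g d else 0)" .
  qed
  also have "\<dots> = (\<Sum>d\<in>{1..N}. \<Sum>(r,s)\<in>{1..N} \<times> {1..N}. if d dvd r \<and> d ^ b dvd s then ?g d else 0)"
    by (subst sum.swap) (simp add: case_prod_unfold)
  also have "\<dots> = (\<Sum>d=1..N. ?g d * of_nat (N div d) * of_nat (N div d ^ b))"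
  proof (intro sum.cong refl)
    fix d assume d: "d \<in> {1..N}"
    show "(\<Sum>(r,s)\<in>{1..N} \<times> {1..N}. if d dvd r \<and> d ^ b dvd s then ?g d else 0) = ?g d * of_nat (N div d) * of_nat (N div d ^ b)"
    proof -
      have c1: "card {r\<in>{1..N}. d dvd r} = N div d" using d by (intro card_multiples) auto
      have c2: "card {r\<in>{1..N}. d ^ b dvd r} = N div d ^ b" using d by (intro card_multiples) auto
      show ?thesis by (simp only: sum_pairs_indicator[OF finite_atLeastAtMost finite_atLeastAtMost] c1 c2)
    qed
  qed
  finally show ?thesis .
qed




lemma prod_has_sum:
  fixes \<alpha> \<beta> :: "nat \<Rightarrow> complex"
  assumes a: "\<alpha> abs_summable_on UNIV" and b: "\<beta> abs_summable_on UNIV"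
  shows "((\<lambda>(d,m). \<alpha> d * \<beta> m) has_sum (infsum \<alpha> UNIV * infsum \<beta> UNIV)) (UNIV \<times> UNIV)"
proof -
  let ?P = "\<lambda>(d,m). \<alpha> d * \<beta> m"
  have "?P abs_summable_on Sigma UNIV (\<lambda>_. UNIV)"
  proof (subst abs_summable_on_Sigma_iff, intro conjI ballI)
    fix x :: nat
    show "(\<lambda>y. ?P (x, y)) abs_summable_on UNIV"
      using summable_on_cmult_right[OF b, of "norm (\<alpha> x)"] by (simp add: norm_mult)
  next
    have "(\<lambda>x. norm (\<alpha> x) * infsum (\<lambda>y. norm (\<beta> y)) UNIV) summable_on UNIV"
      by (rule summable_on_cmult_left[OF a])
    moreover have "(\<lambda>x. infsum (\<lambda>y. norm (?P (x, y))) UNIV) = (\<lambda>x. norm (\<alpha> x) * infsum (\<lambda>y. norm (\<beta> y)) UNIV)"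
      by (simp add: norm_mult infsum_cmult_right')
    ultimately show "(\<lambda>x. infsum (\<lambda>y. norm (?P (x, y))) UNIV) abs_summable_on UNIV"
      by (simp add: infsum_nonneg)
  qed
  then have sP: "?P summable_on UNIV \<times> UNIV" by (rule abs_summable_summable)
  have "infsum ?P (UNIV \<times> UNIV) = infsum (\<lambda>x. infsum (\<lambda>y. ?P (x,y)) UNIV) UNIV"
    using sP by (subst infsum_Sigma_banach) auto
  also have "\<dots> = infsum (\<lambda>x. \<alpha> x * infsum \<beta> UNIV) UNIV"
    by (simp add: infsum_cmult_right')
  also have "\<dots> = infsum \<alpha> UNIV * infsum \<beta> UNIV"
    by (simp add: infsum_cmult_left')
  finally show ?thesis using sP by (metis has_sum_infsum)
qed

lemma conv_has_sum:
  fixes \<alpha> \<beta> :: "nat \<Rightarrow> complex"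
  assumes a: "\<alpha> abs_summable_on UNIV" and b: "\<beta> abs_summable_on UNIV"
    and a0: "\<alpha> 0 = 0" and b0: "\<beta> 0 = 0"
  shows "((\<lambda>n. \<Sum>d\<in>{d. d dvd n}. \<alpha> d * \<beta> (n div d)) has_sum (infsum \<alpha> UNIV * infsum \<beta> UNIV)) UNIV"
proof -
  let ?g = "\<lambda>(n::nat, (d::nat, m::nat)). \<alpha> d * \<beta> m"
  let ?\<phi> = "\<lambda>(d::nat, m::nat). (d * m, (d, m))"
  have inj: "inj_on ?\<phi> (UNIV \<times> UNIV)" by (auto simp: inj_on_def)
  have img: "?\<phi> ` (UNIV \<times> UNIV) = Sigma UNIV (\<lambda>n. {(d,m). d * m = n})" by auto
  have "((?g \<circ> ?\<phi>) has_sum (infsum \<alpha> UNIV * infsum \<beta> UNIV)) (UNIV \<times> UNIV)"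
    using prod_has_sum[OF a b] by (simp add: o_def case_prod_unfold)
  then have "(?g has_sum (infsum \<alpha> UNIV * infsum \<beta> UNIV)) (Sigma UNIV (\<lambda>n. {(d,m). d * m = n}))"
    using has_sum_reindex[OF inj, of ?g] img by simp
  then show ?thesis
  proof (rule has_sum_Sigma')
    fix n :: nat
    show "((\<lambda>y. ?g (n, y)) has_sum (\<Sum>d\<in>{d. d dvd n}. \<alpha> d * \<beta> (n div d))) {(d,m). d * m = n}"
    proof (cases "n = 0")
      case True
      have "infinite {d::nat. d dvd n}" using True infinite_UNIV_nat by simp
      then have "(\<Sum>d\<in>{d. d dvd n}. \<alpha> d * \<beta> (n div d)) = 0" by simp
      moreover have "((\<lambda>y. ?g (n, y)) has_sum 0) {(d,m). d * m = n}"
        using True a0 b0 by (intro has_sum_0) auto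
      ultimately show ?thesis by simp
    next
      case False
      have "(\<Sum>d\<in>{d. d dvd n}. \<alpha> d * \<beta> (n div d)) = (\<Sum>y\<in>{(d,m). d * m = n}. ?g (n, y))"
      proof (rule sum.reindex_bij_witness[where i = fst and j = "\<lambda>d. (d, n div d)"])
        fix p assume "p \<in> {(d,m). d * m = n}"
        then show "(fst p, n div fst p) = p" "fst p \<in> {d. d dvd n}" using False by auto
      next
        fix d assume "d \<in> {d. d dvd n}"
        then show "fst (d, n div d) = d" "(d, n div d) \<in> {(d,m). d * m = n}"
          "?g (n, (d, n div d)) = \<alpha> d * \<beta> (n div d)" by auto
      qed
      moreover have "finite {(d,m). d * m = n}"
      proof (rule finite_subset)
        show "{(d,m). d * m = n} \<subseteq> {d. d dvd n} \<times> {m. m dvd n}" by auto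
        show "finite ({d. d dvd n} \<times> {m. m dvd n})" using False by simp
      qed
      ultimately show ?thesis by simp
    qed
  qed
qed




lemma floor_prod_bound:
  fixes N d e :: nat
  assumes "d > 0" "e > 0" "d \<le> e"
  shows "\<bar>real (N div d) * real (N div e) - real N / real d * (real N / real e)\<bar> \<le> 2 * real N / real d"
proof -
  define q1 where "q1 = real (N div d)"
  define q2 where "q2 = real (N div e)"
  define u where "u = real (N mod d) / real d"
  define v where "v = real (N mod e) / real e"
  have x: "real N / real d = q1 + u"
  proof -
    have "N = d * (N div d) + N mod d" by simp
    then have "real N = real (d * (N div d) + N mod d)" by (rule arg_cong)
    then have "real N = real d * q1 + real (N mod d)" unfolding q1_def by (simp only: of_nat_add of_nat_mult)
    then show ?thesis using assms unfolding u_def by (simp add: field_simps)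
  qed
  have y: "real N / real e = q2 + v"
  proof -
    have "N = e * (N div e) + N mod e" by simp
    then have "real N = real (e * (N div e) + N mod e)" by (rule arg_cong)
    then have "real N = real e * q2 + real (N mod e)" unfolding q2_def by (simp only: of_nat_add of_nat_mult)
    then show ?thesis using assms unfolding v_def by (simp add: field_simps)
  qed
  have u01: "0 \<le> u" "u \<le> 1" using assms unfolding u_def by (auto simp: divide_simps)
  have v01: "0 \<le> v" "v \<le> 1" using assms unfolding v_def by (auto simp: divide_simps)
  have q: "0 \<le> q1" "0 \<le> q2" unfolding q1_def q2_def by auto
  have "(q1 + u) * (q2 + v) - q1 * q2 = q1 * v + u * (q2 + v)" by (simp add: algebra_simps)
  moreover have "0 \<le> q1 * v" "q1 * v \<le> q1" using q v01 by (auto simp: mult_left_le)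
  moreover have "0 \<le> u * (q2 + v)" "u * (q2 + v) \<le> q2 + v" using q u01 v01 by (auto simp: mult_left_le_one_le)
  moreover have "q1 \<le> q1 + u" using u01 by simp
  moreover have "real N / real e \<le> real N / real d" using assms by (simp add: frac_le)
  ultimately have "\<bar>q1 * q2 - (q1 + u) * (q2 + v)\<bar> \<le> real N / real d + real N / real d"
    using x y by linarith
  then show ?thesis using x y unfolding q1_def q2_def by simp
qed

lemma term_bound:
  fixes N d b :: nat and c :: complex
  assumes "N > 0" "d > 0" "b \<ge> 1"
  shows "norm (c * of_nat (N div d) * of_nat (N div d ^ b) / of_nat (N * N) - c / of_nat d ^ (b + 1))
         \<le> 2 * (norm c / real d) / real N"
proof -
  have db: "d \<le> d ^ b" using power_increasing[of 1 b d] assms by simp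
  have dbpos: "d ^ b > 0" using assms by simp
  define D where "D = real (N div d) * real (N div d ^ b) - real N / real d * (real N / real (d ^ b))"
  have DB: "\<bar>D\<bar> \<le> 2 * real N / real d" unfolding D_def by (rule floor_prod_bound[OF assms(2) dbpos db])
  have eq: "c * of_nat (N div d) * of_nat (N div d ^ b) / of_nat (N * N) - c / of_nat d ^ (b + 1)
       = c * complex_of_real (D / (real N * real N))"
    using assms unfolding D_def by (simp add: field_simps)
  have "norm (c * complex_of_real (D / (real N * real N))) = norm c * (\<bar>D\<bar> / (real N * real N))"
    by (simp add: norm_mult norm_divide)
  also have "\<dots> \<le> norm c * ((2 * real N / real d) / (real N * real N))"
    using DB assms by (intro mult_left_mono divide_right_mono) auto
  also have "\<dots> = 2 * (norm c / real d) / real N" using assms by (simp add: field_simps)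
  finally show ?thesis using eq by simp
qed




lemma norm_moebius_le: "norm (moebius n) \<le> 1"
  by (simp add: moebius_def norm_power)

lemma pow_split:
  fixes d n p :: nat assumes "d dvd n"
  shows "(of_nat d ^ p :: complex) * of_nat (n div d) ^ p = of_nat n ^ p"
proof -
  have "(of_nat d ^ p :: complex) * of_nat (n div d) ^ p = of_nat (d * (n div d)) ^ p"
    by (simp add: power_mult_distrib)
  also have "d * (n div d) = n" using assms by simp
  finally show ?thesis .
qed

lemma norm_conv_le:
  fixes n :: nat assumes "n > 0"
  shows "norm (dirichlet_conv f moebius n) \<le> (\<Sum>d\<in>{d. d dvd n}. norm (f d))"
proof -
  have "norm (dirichlet_conv f moebius n) \<le> (\<Sum>d\<in>{d. d dvd n}. norm (f d * moebius (n div d)))"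
    unfolding dirichlet_conv_def by (rule norm_sum)
  also have "\<dots> \<le> (\<Sum>d\<in>{d. d dvd n}. norm (f d))"
  proof (rule sum_mono)
    fix d show "norm (f d * moebius (n div d)) \<le> norm (f d)"
      using norm_moebius_le[of "n div d"] by (simp add: norm_mult mult_left_le)
  qed
  finally show ?thesis .
qed

lemma sum_shift1:
  fixes G :: "nat \<Rightarrow> complex" assumes "G 0 = 0"
  shows "(\<Sum>d<Suc N. G d) = (\<Sum>d=1..N. G d)"
  by (induction N) (simp_all add: assms)

lemma series_facts:
  fixes f :: "nat \<Rightarrow> complex" and p :: nat
  assumes p2: "p \<ge> 2"
    and hs: "summable (\<lambda>n. norm (f (Suc n)) / real (Suc n) ^ p)"
  defines "G \<equiv> \<lambda>n. if n = 0 then 0 else dirichlet_conv f moebius n / of_nat n ^ p"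
  shows "(\<lambda>N. \<Sum>d=1..N. G d) \<longlonglongrightarrow> dirichlet_series_at f p / complex_of_real (zeta_nat p)"
proof -
  define g where "g = dirichlet_conv f moebius"
  define A where "A n = (if n = 0 then 0 else f n / of_nat n ^ p)" for n
  define Fa where "Fa n = (if n = 0 then 0 else complex_of_real (norm (f n)) / of_nat n ^ p)" for n
  define Z where "Z n = (if n = 0 then 0 else 1 / (of_nat n ^ p :: complex))" for n
  have G_def': "G n = (if n = 0 then 0 else g n / of_nat n ^ p)" for n unfolding G_def g_def by simp
  have normA: "norm (A n) = (if n = 0 then 0 else norm (f n) / real n ^ p)" for n
    by (simp add: A_def norm_divide norm_power)
  have normFa: "norm (Fa n) = norm (A n)" for n
    by (simp add: Fa_def normA norm_divide norm_power)
  have "summable (\<lambda>n. norm (A (Suc n)))" using hs by (simp add: normA)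
  then have sA: "summable (\<lambda>n. norm (A n))" using summable_Suc_iff[of "\<lambda>n. norm (A n)"] by simp
  have aA: "A abs_summable_on UNIV" using sA by (simp add: summable_on_UNIV_nonneg_real_iff)
  have aFa: "Fa abs_summable_on UNIV" using aA by (simp add: normFa)
  have normZ: "norm (Z n) = inverse (real n ^ p)" for n
    using p2 by (simp add: Z_def norm_divide norm_power divide_inverse norm_inverse)
  have "summable (\<lambda>n. inverse (real n ^ p))" by (rule inverse_power_summable[OF p2])
  then have aZ: "Z abs_summable_on UNIV"
    by (simp add: normZ summable_on_UNIV_nonneg_real_iff)
  have Fa0: "Fa 0 = 0" and Z0: "Z 0 = 0" and G0: "G 0 = 0" and A0: "A 0 = 0"
    by (simp_all add: Fa_def Z_def G_def A_def)
  define cF where "cF n = (\<Sum>d\<in>{d. d dvd n}. Fa d * Z (n div d))" for n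
  have "(cF has_sum (infsum Fa UNIV * infsum Z UNIV)) UNIV"
    unfolding cF_def by (rule conv_has_sum[OF aFa aZ Fa0 Z0])
  then have "cF summable_on UNIV" by (auto simp: summable_on_def)
  then have acF: "cF abs_summable_on UNIV" by (simp add: summable_on_iff_abs_summable_on_complex)
  have bound: "norm (G n) \<le> norm (cF n)" for n
  proof (cases "n = 0")
    case True then show ?thesis by (simp add: G0)
  next
    case False
    then have npos: "n > 0" by simp
    have "cF n = (\<Sum>d\<in>{d. d dvd n}. complex_of_real (norm (f d)) / of_nat n ^ p)"
      unfolding cF_def
    proof (intro sum.cong refl)
      fix d assume d: "d \<in> {d. d dvd n}"
      then have "d > 0" "n div d > 0" using npos
        by (auto intro!: Nat.gr0I simp: dvd_div_eq_0_iff)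
      then show "Fa d * Z (n div d) = complex_of_real (norm (f d)) / of_nat n ^ p"
        using pow_split[of d n p] d by (simp add: Fa_def Z_def field_simps)
    qed
    also have "\<dots> = (\<Sum>d\<in>{d. d dvd n}. complex_of_real (norm (f d))) / of_nat n ^ p"
      by (simp add: sum_divide_distrib)
    also have "(\<Sum>d\<in>{d. d dvd n}. complex_of_real (norm (f d))) = complex_of_real (\<Sum>d\<in>{d. d dvd n}. norm (f d))"
      by (rule of_real_sum[symmetric])
    finally have cFe: "cF n = complex_of_real (\<Sum>d\<in>{d. d dvd n}. norm (f d)) / of_nat n ^ p" .
    define S where "S = (\<Sum>d\<in>{d. d dvd n}. norm (f d))"
    have "S \<ge> 0" unfolding S_def by (simp add: sum_nonneg)
    then have "norm (cF n) = S / real n ^ p" using cFe unfolding S_def[symmetric]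
      by (simp add: norm_divide norm_power)
    then have "norm (cF n) = (\<Sum>d\<in>{d. d dvd n}. norm (f d)) / real n ^ p" by (simp add: S_def)
    moreover have "norm (G n) = norm (g n) / real n ^ p"
      using False by (simp add: G_def' norm_divide norm_power)
    moreover have "norm (g n) \<le> (\<Sum>d\<in>{d. d dvd n}. norm (f d))"
      unfolding g_def by (rule norm_conv_le[OF npos])
    ultimately show ?thesis by (simp add: divide_right_mono)
  qed
  have aG: "G abs_summable_on UNIV"
    by (rule abs_summable_on_comparison_test[OF acF]) (use bound in auto)
  have convGZ: "(\<Sum>d\<in>{d. d dvd n}. G d * Z (n div d)) = A n" for n
  proof (cases "n = 0")
    case True
    have "infinite {d::nat. d dvd n}" using True infinite_UNIV_nat by simp
    then show ?thesis using True by (simp add: A0)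
  next
    case False
    then have npos: "n > 0" by simp
    have "(\<Sum>d\<in>{d. d dvd n}. G d * Z (n div d)) = (\<Sum>d\<in>{d. d dvd n}. g d / of_nat n ^ p)"
    proof (intro sum.cong refl)
      fix d assume d: "d \<in> {d. d dvd n}"
      then have "d > 0" "n div d > 0" using npos
        by (auto intro!: Nat.gr0I simp: dvd_div_eq_0_iff)
      then show "G d * Z (n div d) = g d / of_nat n ^ p"
        using pow_split[of d n p] d by (simp add: G_def' Z_def field_simps)
    qed
    also have "\<dots> = (\<Sum>d\<in>{d. d dvd n}. g d) / of_nat n ^ p"
      by (simp add: sum_divide_distrib)
    also have "(\<Sum>d\<in>{d. d dvd n}. g d) = f n"
      unfolding g_def by (rule moebius_inversion[OF npos])
    finally show ?thesis using False by (simp add: A_def)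
  qed
  have hA: "(A has_sum (infsum G UNIV * infsum Z UNIV)) UNIV"
    using conv_has_sum[OF aG aZ G0 Z0] by (simp add: convGZ)
  have "A sums (infsum G UNIV * infsum Z UNIV)" by (rule has_sum_imp_sums[OF hA])
  then have "(\<lambda>n. A (Suc n)) sums (infsum G UNIV * infsum Z UNIV)"
    by (subst sums_Suc_iff) (simp add: A0)
  moreover have "(\<lambda>n. A (Suc n)) = (\<lambda>n. f (Suc n) / of_nat (Suc n) ^ p)"
    by (simp add: A_def)
  ultimately have DS: "dirichlet_series_at f p = infsum G UNIV * infsum Z UNIV"
    unfolding dirichlet_series_at_def by (metis sums_unique)
  have "Z summable_on UNIV" by (rule abs_summable_summable[OF aZ])
  then have "Z sums infsum Z UNIV" by (intro has_sum_imp_sums has_sum_infsum)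
  then have zs1: "(\<lambda>n. Z (Suc n)) sums infsum Z UNIV"
    by (subst sums_Suc_iff) (simp add: Z0)
  have "summable (\<lambda>n. inverse (real n ^ p))" by (rule inverse_power_summable[OF p2])
  then have "summable (\<lambda>n. inverse (real (Suc n) ^ p))" by (subst summable_Suc_iff)
  then have sreal: "summable (\<lambda>n. 1 / real (Suc n) ^ p)" by (simp add: divide_inverse)
  then have "(\<lambda>n. 1 / real (Suc n) ^ p) sums zeta_nat p"
    unfolding zeta_nat_def by (rule summable_sums)
  then have "(\<lambda>n. complex_of_real (1 / real (Suc n) ^ p)) sums complex_of_real (zeta_nat p)"
    by (rule sums_of_real)
  moreover have "(\<lambda>n. complex_of_real (1 / real (Suc n) ^ p)) = (\<lambda>n. Z (Suc n))"
    by (simp add: Z_def)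
  ultimately have ZZ: "complex_of_real (zeta_nat p) = infsum Z UNIV"
    using zs1 sums_unique2 by metis
  have "zeta_nat p > 0" unfolding zeta_nat_def
    by (rule suminf_pos2[OF sreal, of 0]) auto
  then have Znz: "infsum Z UNIV \<noteq> 0" using ZZ by (metis of_real_eq_0_iff less_irrefl)
  have L: "dirichlet_series_at f p / complex_of_real (zeta_nat p) = infsum G UNIV"
    using DS ZZ Znz by simp
  have "G summable_on UNIV" by (rule abs_summable_summable[OF aG])
  then have "G sums infsum G UNIV" by (intro has_sum_imp_sums has_sum_infsum)
  then have "(\<lambda>N. \<Sum>d<N. G d) \<longlonglongrightarrow> infsum G UNIV" by (simp add: sums_def)
  then have "(\<lambda>N. \<Sum>d<Suc N. G d) \<longlonglongrightarrow> infsum G UNIV" by (rule LIMSEQ_Suc)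
  then have "(\<lambda>N. \<Sum>d=1..N. G d) \<longlonglongrightarrow> infsum G UNIV" by (simp only: sum_shift1[of G, OF G0])
  then show ?thesis unfolding L .
qed




lemma part1:
  fixes f :: "nat \<Rightarrow> complex" and b :: nat
  assumes b: "b \<ge> 1"
    and hyp: "(\<lambda>N. (\<Sum>k = 1..N. norm (dirichlet_conv f moebius k) / real k) / real N) \<longlonglongrightarrow> 0"
    and hs: "summable (\<lambda>n. norm (f (Suc n)) / real (Suc n) ^ (b + 1))"
  shows "has_mean_value (\<lambda>r s. f (gcd_b b r s))
                 (dirichlet_series_at f (b + 1) / complex_of_real (zeta_nat (b + 1)))"
proof -
  define g where "g = dirichlet_conv f moebius"
  define G where "G = (\<lambda>n. if n = 0 then 0 else dirichlet_conv f moebius n / of_nat n ^ (b + 1))"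
  define L where "L = dirichlet_series_at f (b + 1) / complex_of_real (zeta_nat (b + 1))"
  define T where "T N = (\<Sum>d=1..N. G d)" for N
  have TL: "T \<longlonglongrightarrow> L" unfolding T_def G_def L_def
    by (rule series_facts) (use b hs in auto)
  define M where "M N = (\<Sum>(r,s)\<in>{1..N}\<times>{1..N}. f (gcd_b b r s)) / of_nat (card ({1..N}\<times>{1..N}))" for N
  have Meq: "M N = (\<Sum>d=1..N. g d * of_nat (N div d) * of_nat (N div d ^ b) / of_nat (N * N))" for N
  proof -
    have "card ({1..N}\<times>{1..N}) = N * N" by (simp add: card_cartesian_product)
    then show ?thesis unfolding M_def sum_gcd_b g_def by (simp add: sum_divide_distrib)
  qed
  have Teq: "T N = (\<Sum>d=1..N. g d / of_nat d ^ (b + 1))" for N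
    unfolding T_def by (intro sum.cong) (auto simp: G_def g_def)
  have bnd: "norm (M N - T N) \<le> 2 * ((\<Sum>k=1..N. norm (g k) / real k) / real N)" if N: "N > 0" for N
  proof -
    have "M N - T N = (\<Sum>d=1..N. g d * of_nat (N div d) * of_nat (N div d ^ b) / of_nat (N * N) - g d / of_nat d ^ (b + 1))"
      by (simp add: Meq Teq sum_subtractf)
    then have "norm (M N - T N) \<le> (\<Sum>d=1..N. norm (g d * of_nat (N div d) * of_nat (N div d ^ b) / of_nat (N * N) - g d / of_nat d ^ (b + 1)))"
      by (simp add: norm_sum)
    also have "\<dots> \<le> (\<Sum>d=1..N. 2 * (norm (g d) / real d) / real N)"
      by (intro sum_mono term_bound) (use N b in auto)
    also have "\<dots> = 2 * ((\<Sum>k=1..N. norm (g k) / real k) / real N)"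
      by (simp add: sum_distrib_left sum_divide_distrib)
    finally show ?thesis .
  qed
  have "(\<lambda>N. 2 * ((\<Sum>k=1..N. norm (g k) / real k) / real N)) \<longlonglongrightarrow> 2 * 0"
    using hyp unfolding g_def by (intro tendsto_mult tendsto_const)
  then have lim0: "(\<lambda>N. 2 * ((\<Sum>k=1..N. norm (g k) / real k) / real N)) \<longlonglongrightarrow> 0" by simp
  have ev: "\<forall>\<^sub>F N in sequentially. norm (M N - T N) \<le> 2 * ((\<Sum>k=1..N. norm (g k) / real k) / real N)"
    by (rule eventually_mono[OF eventually_gt_at_top[of 0]]) (rule bnd)
  have "(\<lambda>N. M N - T N) \<longlonglongrightarrow> 0"
    by (rule Lim_null_comparison[OF ev lim0])
  then have "(\<lambda>N. (M N - T N) + T N) \<longlonglongrightarrow> 0 + L" by (intro tendsto_add TL)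
  then have "M \<longlonglongrightarrow> L" by simp
  then show ?thesis unfolding has_mean_value_def M_def L_def .
qed

lemma harm_le:
  fixes N :: nat assumes "N \<ge> 1"
  shows "(\<Sum>d=1..N. 1 / real d) \<le> 1 + ln (real N)"
  using assms
proof (induction N)
  case 0 then show ?case by simp
next
  case (Suc n)
  show ?case
  proof (cases "n = 0")
    case True then show ?thesis by simp
  next
    case False
    then have n: "n \<ge> 1" by simp
    have IH: "(\<Sum>d=1..n. 1 / real d) \<le> 1 + ln (real n)" using Suc.IH n by simp
    have "ln (real n / real (Suc n)) \<le> real n / real (Suc n) - 1"
      using n by (intro ln_le_minus_one) auto
    moreover have "ln (real n / real (Suc n)) = ln (real n) - ln (real (Suc n))"
      using n by (intro ln_divide_pos) auto
    moreover have "real n / real (Suc n) - 1 = - (1 / real (Suc n))"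
      by (simp add: field_simps)
    ultimately have "1 / real (Suc n) \<le> ln (real (Suc n)) - ln (real n)" by linarith
    moreover have "(\<Sum>d=1..Suc n. 1 / real d) = (\<Sum>d=1..n. 1 / real d) + 1 / real (Suc n)"
      by simp
    ultimately show ?thesis using IH by linarith
  qed
qed

lemma multiples_eq:
  fixes e N :: nat assumes "e > 0"
  shows "{k\<in>{1..N}. e dvd k} = (\<lambda>m. e * m) ` {1..N div e}"
proof safe
  fix k assume k: "k \<in> {1..N}" "e dvd k"
  then obtain m where m: "k = e * m" by auto
  have "m \<ge> 1" using k m by (cases m) auto
  moreover have "m \<le> N div e" using k m assms
    by (metis atLeastAtMost_iff div_le_mono nonzero_mult_div_cancel_left not_gr0)
  ultimately show "k \<in> (\<lambda>m. e * m) ` {1..N div e}" using m by auto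
next
  fix m assume m: "m \<in> {1..N div e}"
  have "e * m \<le> e * (N div e)" using m by simp
  also have "\<dots> \<le> N" by simp
  finally show "e * m \<in> {1..N}" using m assms by auto
qed auto

lemma tau_sum:
  fixes N :: nat
  shows "(\<Sum>k=1..N. \<Sum>d\<in>{d. d dvd k}. 1 / real k) \<le> (\<Sum>d=1..N. 1 / real d) ^ 2"
proof -
  have "(\<Sum>k=1..N. \<Sum>d\<in>{d. d dvd k}. 1 / real k) = (\<Sum>k=1..N. \<Sum>d\<in>{1..N}. if d dvd k then 1 / real k else 0)"
  proof (rule sum.cong[OF refl])
    fix k assume k: "k \<in> {1..N}"
    have "{d. d dvd k} = {d\<in>{1..N}. d dvd k}" using k
      by (auto dest: dvd_imp_le intro: Nat.gr0I)
    then show "(\<Sum>d\<in>{d. d dvd k}. 1 / real k) = (\<Sum>d\<in>{1..N}. if d dvd k then 1 / real k else 0)"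
      by (simp only: sum.inter_filter[OF finite_atLeastAtMost])
  qed
  also have "\<dots> = (\<Sum>d\<in>{1..N}. \<Sum>k=1..N. if d dvd k then 1 / real k else 0)"
    by (rule sum.swap)
  also have "\<dots> = (\<Sum>d\<in>{1..N}. \<Sum>m\<in>{1..N div d}. 1 / (real d * real m))"
  proof (rule sum.cong[OF refl])
    fix d assume d: "d \<in> {1..N}"
    then have dpos: "d > 0" by simp
    have "(\<Sum>k=1..N. if d dvd k then 1 / real k else 0) = (\<Sum>k\<in>{k\<in>{1..N}. d dvd k}. 1 / real k)"
      by (simp only: sum.inter_filter[OF finite_atLeastAtMost])
    also have "\<dots> = (\<Sum>k\<in>(\<lambda>m. d * m) ` {1..N div d}. 1 / real k)"
      by (simp only: multiples_eq[OF dpos])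
    also have "\<dots> = (\<Sum>m\<in>{1..N div d}. 1 / (real d * real m))"
      using dpos by (subst sum.reindex) (auto simp: inj_on_def)
    finally show "(\<Sum>k=1..N. if d dvd k then 1 / real k else 0) = (\<Sum>m\<in>{1..N div d}. 1 / (real d * real m))" .
  qed
  also have "\<dots> \<le> (\<Sum>d\<in>{1..N}. \<Sum>m\<in>{1..N}. 1 / (real d * real m))"
  proof (intro sum_mono sum_mono2)
    fix d assume "d \<in> {1..N}"
    show "{1..N div d} \<subseteq> {1..N}" by auto
  qed auto
  also have "\<dots> = (\<Sum>d=1..N. 1 / real d) ^ 2"
    by (simp add: power2_eq_square sum_product)
  finally show ?thesis .
qed

lemma part2:
  fixes f :: "nat \<Rightarrow> complex"
  assumes "\<exists>C. \<forall>n \<ge> 1. norm (f n) \<le> C"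
  shows "(\<lambda>N. (\<Sum>k = 1..N. norm (dirichlet_conv f moebius k) / real k) / real N) \<longlonglongrightarrow> 0"
proof -
  obtain C where C: "\<And>n. n \<ge> 1 \<Longrightarrow> norm (f n) \<le> C" using assms by blast
  have "norm (f 1) \<le> C" using C by simp
  then have C0: "C \<ge> 0" using norm_ge_zero[of "f 1"] by linarith
  have bnd: "(\<Sum>k = 1..N. norm (dirichlet_conv f moebius k) / real k) / real N \<le> C * (1 + ln (real N)) ^ 2 / real N"
    if N: "N \<ge> 1" for N
  proof -
    have "(\<Sum>k = 1..N. norm (dirichlet_conv f moebius k) / real k) \<le> (\<Sum>k = 1..N. C * (\<Sum>d\<in>{d. d dvd k}. 1 / real k))"
    proof (intro sum_mono)
      fix k assume k: "k \<in> {1..N}"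
      then have kpos: "k > 0" by simp
      have "norm (dirichlet_conv f moebius k) \<le> (\<Sum>d\<in>{d. d dvd k}. norm (f d))"
        by (rule norm_conv_le[OF kpos])
      also have "\<dots> \<le> (\<Sum>d\<in>{d. d dvd k}. C)"
      proof (intro sum_mono)
        fix d assume "d \<in> {d. d dvd k}"
        then have "d \<ge> 1" using kpos by (auto intro: Nat.gr0I)
        then show "norm (f d) \<le> C" by (rule C)
      qed
      finally have "norm (dirichlet_conv f moebius k) / real k \<le> (\<Sum>d\<in>{d. d dvd k}. C) / real k"
        by (simp add: divide_right_mono)
      also have "\<dots> = C * (\<Sum>d\<in>{d. d dvd k}. 1 / real k)" by (simp add: sum_distrib_left)
      finally show "norm (dirichlet_conv f moebius k) / real k \<le> C * (\<Sum>d\<in>{d. d dvd k}. 1 / real k)" .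
    qed
    also have "\<dots> = C * (\<Sum>k = 1..N. \<Sum>d\<in>{d. d dvd k}. 1 / real k)" by (simp add: sum_distrib_left)
    also have "\<dots> \<le> C * (\<Sum>d=1..N. 1 / real d) ^ 2" by (intro mult_left_mono tau_sum C0)
    also have "\<dots> \<le> C * (1 + ln (real N)) ^ 2"
      by (intro mult_left_mono power_mono harm_le N C0) (auto intro: sum_nonneg)
    finally show ?thesis by (simp add: divide_right_mono)
  qed
  have lim: "(\<lambda>N::nat. (1 + ln (real N)) ^ 2 / real N) \<longlonglongrightarrow> 0" by real_asymp
  have "(\<lambda>N. C * ((1 + ln (real N)) ^ 2 / real N)) \<longlonglongrightarrow> C * 0"
    by (intro tendsto_mult tendsto_const lim)
  then have lim2: "(\<lambda>N. C * (1 + ln (real N)) ^ 2 / real N) \<longlonglongrightarrow> 0" by simp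
  show ?thesis
  proof (rule Lim_null_comparison[OF _ lim2])
    show "\<forall>\<^sub>F N in sequentially. norm ((\<Sum>k = 1..N. norm (dirichlet_conv f moebius k) / real k) / real N) \<le> C * (1 + ln (real N)) ^ 2 / real N"
    proof (rule eventually_mono[OF eventually_ge_at_top[of 1]])
      fix N :: nat assume N1: "N \<ge> 1"
      define X where "X = (\<Sum>k = 1..N. norm (dirichlet_conv f moebius k) / real k) / real N"
      have nn: "0 \<le> X" unfolding X_def
        by (intro divide_nonneg_nonneg sum_nonneg) auto
      have "X \<le> C * (1 + ln (real N)) ^ 2 / real N" unfolding X_def by (rule bnd[OF N1])
      then have "norm X \<le> C * (1 + ln (real N)) ^ 2 / real N" using nn by simp
      then show "norm ((\<Sum>k = 1..N. norm (dirichlet_conv f moebius k) / real k) / real N) \<le> C * (1 + ln (real N)) ^ 2 / real N"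
        unfolding X_def .
    qed
  qed
qed

theorem mainTheorem1:
  fixes b :: nat
  assumes "b \<ge> 1"
  shows "(\<forall>f :: nat \<Rightarrow> complex.
           ((\<lambda>N. (\<Sum>k = 1..N. norm (dirichlet_conv f moebius k) / real k) / real N) \<longlonglongrightarrow> 0)
           \<longrightarrow> summable (\<lambda>n. norm (f (Suc n)) / real (Suc n) ^ (b + 1))
           \<longrightarrow> has_mean_value (\<lambda>r s. f (gcd_b b r s))
                 (dirichlet_series_at f (b + 1) / complex_of_real (zeta_nat (b + 1))))
         \<and> (\<forall>f :: nat \<Rightarrow> complex. (\<exists>C. \<forall>n \<ge> 1. norm (f n) \<le> C) \<longrightarrow>
           ((\<lambda>N. (\<Sum>k = 1..N. norm (dirichlet_conv f moebius k) / real k) / real N) \<longlonglongrightarrow> 0))"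
  using part1[OF assms] part2 by blast


end
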